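(* Let $S$ be a finite semigroup satisfying the quasi-identities $$\forall a\,\forall b\,\forall \alpha\,\forall\beta\ \big((a\alpha=a\beta)\to(b\alpha=b\beta)\big),\qquad \forall a\,\forall b\,\forall \alpha\,\forall\beta\ \big((\alpha a=\beta a)\to(\alpha b=\beta b)\big).$$ Then $\mathrm{Ker}(S)=\mathrm{Red}(S)$, i.e. the kernel of $S$ is exactly the set of reducible elements of $S$.
   Context: The kernel $\mathrm{Ker}(S)$ of a finite semigroup $S$ is its (unique) minimal two-sided ideal. An element $s\in S$ is reducible if $s=ab$ for some $a,b\in S$; $\mathrm{Red}(S)$ is the set of reducible elements. *)

theory Defs
  imports Main
begin

definition two_sided_ideal :: "'a::semigroup_mult set \<Rightarrow> bool" where
  "two_sided_ideal I \<longleftrightarrow> I \<noteq> {} \<and> (\<forall>x\<in>I. \<forall>s. s * x \<in> I \<and> x * s \<in> I)"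

definition minimal_ideal :: "'a::semigroup_mult set \<Rightarrow> bool" where
  "minimal_ideal I \<longleftrightarrow> two_sided_ideal I \<and> (\<forall>J. two_sided_ideal J \<and> J \<subseteq> I \<longrightarrow> J = I)"

definition Ker :: "'a::semigroup_mult set" where
  "Ker = (THE I. minimal_ideal I)"

definition Red :: "'a::semigroup_mult set" where
  "Red = {s. \<exists>a b. s = a * b}"

end

theory Submission
  imports Defs
begin

primrec pw :: "'a::semigroup_mult \<Rightarrow> nat \<Rightarrow> 'a" where
  "pw k 0 = k"
| "pw k (Suc n) = k * pw k n"

lemma pw_add: "pw k (m + n + 1) = pw k m * pw k n"
  by (induction m) (simp_all add: mult.assoc)

lemma pw_in: "two_sided_ideal J \<Longrightarrow> k \<in> J \<Longrightarrow> pw k n \<in> J"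
  by (induction n) (auto simp: two_sided_ideal_def)

lemma idem_exists:
  fixes k :: "'a::{finite,semigroup_mult}"
  shows "\<exists>n. pw k n * pw k n = pw k n"
proof -
  have "\<not> inj (pw k)"
  proof
    assume "inj (pw k)"
    then have "infinite (range (pw k))" using finite_imageD by blast
    then show False by simp
  qed
  then obtain i j where ij: "pw k i = pw k j" "i \<noteq> j" unfolding inj_def by blast
  then obtain i j where ij: "pw k i = pw k j" "i < j"
    by (metis linorder_neqE_nat)
  define p where "p = j - i"
  have p: "p > 0" "j = i + p" using ij p_def by auto
  have per: "pw k (i + t + p) = pw k (i + t)" for t
  proof (induction t)
    case 0 show ?case using ij p by simp
  next
    case (Suc t)
    have "pw k (i + Suc t + p) = k * pw k (i + t + p)" by simp
    also have "\<dots> = k * pw k (i + t)" using Suc by simp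
    finally show ?case by simp
  qed
  have perq: "pw k (i + t + q * p) = pw k (i + t)" for t q
  proof (induction q)
    case (Suc q)
    have "pw k (i + t + Suc q * p) = pw k (i + (t + q * p) + p)" by (simp add: algebra_simps)
    also have "\<dots> = pw k (i + (t + q*p))" by (rule per)
    also have "\<dots> = pw k (i + t)" using Suc by (simp add: algebra_simps)
    finally show ?case .
  qed simp
  define n where "n = p * (i + 1) - 1"
  have ni: "n \<ge> i"
  proof -
    have "p * (i + 1) \<ge> 1 * (i + 1)" using p by (intro mult_right_mono) auto
    then show "n \<ge> i" unfolding n_def by simp
  qed
  have n1: "n + 1 = (i+1) * p"
  proof -
    have "p * (i + 1) \<ge> 1 * (i + 1)" using p by (intro mult_right_mono) auto
    then show ?thesis unfolding n_def by (simp add: mult.commute)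
  qed
  have A: "pw k n * pw k n = pw k (n + n + 1)" by (rule pw_add[symmetric])
  have B: "n + n + 1 = i + (n - i) + (i+1) * p" using n1 ni by linarith
  have C: "pw k (i + (n - i) + (i+1) * p) = pw k (i + (n - i))" by (rule perq)
  have D: "i + (n - i) = n" using ni by simp
  have "pw k n * pw k n = pw k n" using A B C D by metis
  then show ?thesis by (rule exI)
qed

lemma min_unique:
  assumes mI: "minimal_ideal I" and mJ: "minimal_ideal J" shows "I = J"
proof -
  have II: "two_sided_ideal I" and JI: "two_sided_ideal J"
    using mI mJ unfolding minimal_ideal_def by auto
  from II obtain i where i: "i \<in> I" unfolding two_sided_ideal_def by blast
  from JI obtain j where j: "j \<in> J" unfolding two_sided_ideal_def by blast
  have "i * j \<in> I" using i II unfolding two_sided_ideal_def by blast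
  moreover have "i * j \<in> J" using j JI unfolding two_sided_ideal_def by blast
  ultimately have ne: "I \<inter> J \<noteq> {}" by blast
  have cl: "\<forall>x\<in>I \<inter> J. \<forall>s. s * x \<in> I \<inter> J \<and> x * s \<in> I \<inter> J"
  proof (intro ballI allI)
    fix x s assume "x \<in> I \<inter> J"
    then show "s * x \<in> I \<inter> J \<and> x * s \<in> I \<inter> J"
      using II JI unfolding two_sided_ideal_def by blast
  qed
  have T: "two_sided_ideal (I \<inter> J)" unfolding two_sided_ideal_def using ne cl by blast
  have "I \<inter> J = I" using mI T unfolding minimal_ideal_def by blast
  moreover have "I \<inter> J = J" using mJ T unfolding minimal_ideal_def by blast
  ultimately show ?thesis by simp
qed

theorem lemma3:
  assumes left: "\<And>(a::'a::{finite,semigroup_mult}) b \<alpha> \<beta>. a * \<alpha> = a * \<beta> \<Longrightarrow> b * \<alpha> = b * \<beta>"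
    and right: "\<And>(a::'a) b \<alpha> \<beta>. \<alpha> * a = \<beta> * a \<Longrightarrow> \<alpha> * b = \<beta> * b"
  shows "(Ker :: 'a set) = Red"
proof -
  have RI: "two_sided_ideal (Red :: 'a set)"
    unfolding two_sided_ideal_def Red_def
  proof (intro conjI ballI allI)
    fix x :: 'a
    show "{s. \<exists>a b. s = a * b} \<noteq> {}" by blast
  next
    fix x s :: 'a assume "x \<in> {s. \<exists>a b. s = a * b}"
    then obtain a b where "x = a * b" by blast
    show "s * x \<in> {s. \<exists>a b. s = a * b}" by blast
    show "x * s \<in> {s. \<exists>a b. s = a * b}" by blast
  qed
  have sub: "(Red :: 'a set) \<subseteq> J" if J: "two_sided_ideal J" for J
  proof
    fix x :: 'a assume "x \<in> Red"
    then obtain a b where x: "x = a * b" unfolding Red_def by blast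
    from J obtain k where k: "k \<in> J" unfolding two_sided_ideal_def by blast
    obtain n where e: "pw k n * pw k n = pw k n" using idem_exists by blast
    define e where "e = pw k n"
    have eJ: "e \<in> J" using pw_in[OF J k] e_def by simp
    have ee: "e * e = e" using e e_def by simp
    have "(a * e) * e = a * e" by (simp add: mult.assoc ee)
    then have "(a * e) * b = a * b" by (rule right)
    then have "x = (a * e) * b" using x by simp
    then show "x \<in> J" using eJ J unfolding two_sided_ideal_def by blast
  qed
  have mR: "minimal_ideal (Red :: 'a set)"
    unfolding minimal_ideal_def using RI sub by blast
  show ?thesis unfolding Ker_def
  proof (rule the_equality)
    show "minimal_ideal (Red :: 'a set)" by (rule mR)
  next
    fix I :: "'a set" assume "minimal_ideal I"
    then show "I = Red" using mR by (rule min_unique)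
  qed
qed

end
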